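(* There exists a universal constant $C<\infty$ such that the following holds. Let $(a_{ijk})_{i,j\le n,k\le m}$ be real numbers, $T\subset\mathbb{R}^m$ a nonempty bounded set and $U\subset B_2^n$. Then for every $r>0$ there exists a decomposition $U=\bigcup_{i=1}^N U_i$ with $N\leq e^{Cr}$ such that for each $i$, \[ \sup_{x,x'\in U_i}\beta_{A,T}(x-x')\leq r^{-1/2}s_A(T). \]
   Context: $B_2^n$ is the Euclidean unit ball in $\mathbb{R}^n$. With $g_1,\dots,g_n,g_1',\dots,g_n'$ i.i.d. $\mathcal N(0,1)$: $\beta_{A,T}(x)=\mathbb{E}\sup_{t\in T}|\sum_{i,j,k}a_{ijk}g_ix_jt_k|$ for $x\in\mathbb{R}^n$, and $s_A(T)=\mathbb{E}\sup_{t\in T}|\sum_{i,j,k}a_{ijk}g_ig_j't_k|$. *)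

theory Defs
  imports "HOL-Probability.Probability"
begin

definition gauss_vec :: "nat \<Rightarrow> (nat \<Rightarrow> real) measure" where
  "gauss_vec n = PiM {..<n} (\<lambda>_. density lborel std_normal_density)"

definition betaAT :: "nat \<Rightarrow> nat \<Rightarrow> (nat \<Rightarrow> nat \<Rightarrow> nat \<Rightarrow> real) \<Rightarrow> (nat \<Rightarrow> real) set
    \<Rightarrow> (nat \<Rightarrow> real) \<Rightarrow> real" where
  "betaAT n m a T x = (\<integral>g. (SUP t\<in>T. \<bar>\<Sum>i<n. \<Sum>j<n. \<Sum>k<m. a i j k * g i * x j * t k\<bar>) \<partial>gauss_vec n)"

definition sAT :: "nat \<Rightarrow> nat \<Rightarrow> (nat \<Rightarrow> nat \<Rightarrow> nat \<Rightarrow> real) \<Rightarrow> (nat \<Rightarrow> real) set \<Rightarrow> real" where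
  "sAT n m a T = (\<integral>gg. (SUP t\<in>T. \<bar>\<Sum>i<n. \<Sum>j<n. \<Sum>k<m. a i j k * fst gg i * snd gg j * t k\<bar>)
      \<partial>(gauss_vec n \<Otimes>\<^sub>M gauss_vec n))"

end

theory Submission
  imports Defs
begin


abbreviation "GG \<equiv> density lborel (\<lambda>x. ennreal (std_normal_density x))"

lemma prob_GG: "prob_space GG"
  using prob_space_normal_density[of 1 0] by simp

lemma prob_gauss_vec: "prob_space (gauss_vec n)"
  unfolding gauss_vec_def by (intro prob_space_PiM prob_GG)

lemma product_sigma_finite_GG: "product_sigma_finite (\<lambda>_::nat. GG)"
proof -
  interpret product_prob_space "\<lambda>_::nat. GG" by (intro product_prob_spaceI prob_GG)
  show ?thesis by unfold_locales
qed

lemma sets_gauss_vec: "sets (gauss_vec n) = sets (PiM {..<n} (\<lambda>_. borel :: real measure))"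
  unfolding gauss_vec_def by (intro sets_PiM_cong) auto

lemma space_gauss_vec: "space (gauss_vec n) = PiE {..<n} (\<lambda>_. UNIV)"
  unfolding gauss_vec_def by (simp add: space_PiM)

lemma gauss_comp_meas[measurable]: "(\<lambda>h. h i) \<in> borel_measurable (gauss_vec n)"
proof (cases "i < n")
  case True
  have "(\<lambda>h. h i) \<in> measurable (PiM {..<n} (\<lambda>_. GG)) GG"
    by (rule measurable_component_singleton) (simp add: True)
  moreover have "measurable (PiM {..<n} (\<lambda>_. GG)) GG = borel_measurable (PiM {..<n} (\<lambda>_. GG))"
    by (rule measurable_cong_sets) auto
  ultimately show ?thesis unfolding gauss_vec_def by simp
next
  case False
  have "(\<lambda>h. undefined :: real) \<in> borel_measurable (gauss_vec n)" by simp
  then show ?thesis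
    by (rule measurable_cong[THEN iffD1, rotated]) (use False in \<open>auto simp: space_gauss_vec PiE_def extensional_def\<close>)
qed

lemma lborel_shift:
  fixes g :: "real \<Rightarrow> ennreal"
  assumes [measurable]: "g \<in> borel_measurable borel"
  shows "(\<integral>\<^sup>+x. g (c + x) \<partial>lborel) = (\<integral>\<^sup>+x. g x \<partial>lborel)"
proof -
  have "(\<integral>\<^sup>+x. g x \<partial>lborel) = (\<integral>\<^sup>+x. g x \<partial>(distr lborel borel ((+) c)))"
    by (simp add: lborel_distr_plus)
  also have "\<dots> = (\<integral>\<^sup>+x. g (c + x) \<partial>lborel)"
    by (subst nn_integral_distr) auto
  finally show ?thesis by simp
qed

lemma dens_shift_eq: "std_normal_density x * exp (c * x - c^2/2) = normal_density c 1 x"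
proof -
  have "exp (- (x - 0)\<^sup>2 / (2 * 1\<^sup>2)) * exp (c * x - c^2/2) = exp (- (x - c)\<^sup>2 / (2 * 1\<^sup>2))"
    by (subst exp_add[symmetric]) (simp add: power2_eq_square algebra_simps)
  then show ?thesis by (simp add: normal_density_def)
qed

lemma preimage_shift_PiE:
  "(\<lambda>h. restrict (\<lambda>i. h i + a i) {..<n}) -` PiE {..<n} A \<inter> PiE {..<n} (\<lambda>_. UNIV) = PiE {..<n} (\<lambda>i. {x::real. x + a i \<in> A i})"
  by (auto simp: restrict_PiE_iff PiE_iff)

lemma gauss_shift_measure:
  fixes a :: "nat \<Rightarrow> real" and n :: nat
  defines "S \<equiv> (\<lambda>h. restrict (\<lambda>i. h i + a i) {..<n})"
  defines "E \<equiv> (\<lambda>h. \<Prod>i<n. ennreal (exp (a i * h i - (a i)^2/2)))"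
  shows "S \<in> measurable (gauss_vec n) (gauss_vec n)"
    and "distr (gauss_vec n) (gauss_vec n) S = density (gauss_vec n) E"
proof -
  define H where "H = (\<lambda>i. density lborel (\<lambda>x. ennreal (normal_density (a i) 1 x)))"
  interpret H: product_prob_space H
    unfolding H_def by (intro product_prob_spaceI prob_space_normal_density) simp
  interpret GP: product_sigma_finite "\<lambda>_::nat. GG" by (rule product_sigma_finite_GG)
  have "S \<in> measurable (gauss_vec n) (PiM {..<n} (\<lambda>_. GG))"
    unfolding S_def
  proof (rule measurable_restrict)
    fix i :: nat
    have "(\<lambda>h. h i + a i) \<in> borel_measurable (gauss_vec n)" by measurable
    then show "(\<lambda>h. h i + a i) \<in> measurable (gauss_vec n) GG"
      by (simp add: measurable_cong_sets[OF refl sets_density] measurable_cong_sets[OF refl sets_lborel])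
  qed
  then show Sm: "S \<in> measurable (gauss_vec n) (gauss_vec n)" unfolding gauss_vec_def .
  have Em: "E \<in> borel_measurable (gauss_vec n)"
    unfolding E_def by measurable
  have setsH: "sets (PiM {..<n} H) = sets (gauss_vec n)"
    unfolding H_def gauss_vec_def by (intro sets_PiM_cong) auto
  have 1: "distr (gauss_vec n) (gauss_vec n) S = PiM {..<n} H"
  proof (rule H.PiM_eqI)
    show "sets (distr (gauss_vec n) (gauss_vec n) S) = sets (PiM {..<n} H)" using setsH by simp
  next
    fix A assume A: "\<And>i. i \<in> {..<n} \<Longrightarrow> A i \<in> sets (H i)"
    have Ab[measurable]: "i < n \<Longrightarrow> A i \<in> sets borel" for i using A[of i] by (simp add: H_def)
    have "PiE {..<n} A \<in> sets (gauss_vec n)"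
      using A setsH by (auto intro!: sets_PiM_I_finite simp del: sets_density)
    then have "emeasure (distr (gauss_vec n) (gauss_vec n) S) (PiE {..<n} A)
        = emeasure (gauss_vec n) (S -` PiE {..<n} A \<inter> space (gauss_vec n))"
      using Sm by (simp add: emeasure_distr)
    also have "S -` PiE {..<n} A \<inter> space (gauss_vec n) = PiE {..<n} (\<lambda>i. {x. x + a i \<in> A i})"
      unfolding S_def space_gauss_vec by (rule preimage_shift_PiE)
    also have "emeasure (gauss_vec n) \<dots> = (\<Prod>i<n. emeasure GG {x. x + a i \<in> A i})"
      unfolding gauss_vec_def
      by (subst GP.emeasure_PiM) auto
    also have "\<dots> = (\<Prod>i<n. emeasure (H i) (A i))"
    proof (rule prod.cong[OF refl])
      fix i assume "i \<in> {..<n}"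
      then have [measurable]: "A i \<in> sets borel" by simp
      have "emeasure GG {x. x + a i \<in> A i} = (\<integral>\<^sup>+x. ennreal (std_normal_density x) * indicator {x. x + a i \<in> A i} x \<partial>lborel)"
        by (subst emeasure_density) (auto simp: nn_integral_set_ennreal)
      also have "\<dots> = (\<integral>\<^sup>+x. ennreal (normal_density (a i) 1 (a i + x)) * indicator (A i) (a i + x) \<partial>lborel)"
        by (intro nn_integral_cong) (auto simp: normal_density_def indicator_def add.commute)
      also have "\<dots> = (\<integral>\<^sup>+x. ennreal (normal_density (a i) 1 x) * indicator (A i) x \<partial>lborel)"
        by (rule lborel_shift) measurable
      also have "\<dots> = emeasure (H i) (A i)"
        unfolding H_def by (subst emeasure_density) (auto simp: nn_integral_set_ennreal mult.commute)
      finally show "emeasure GG {x. x + a i \<in> A i} = emeasure (H i) (A i)" .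
    qed
    finally show "emeasure (distr (gauss_vec n) (gauss_vec n) S) (PiE {..<n} A) = (\<Prod>i\<in>{..<n}. emeasure (H i) (A i))"
      by simp
  qed simp
  have 2: "density (gauss_vec n) E = PiM {..<n} H"
  proof (rule H.PiM_eqI)
    show "sets (density (gauss_vec n) E) = sets (PiM {..<n} H)" using setsH by simp
  next
    fix A assume A: "\<And>i. i \<in> {..<n} \<Longrightarrow> A i \<in> sets (H i)"
    have Ab[measurable]: "i < n \<Longrightarrow> A i \<in> sets borel" for i using A[of i] by (simp add: H_def)
    have PA: "PiE {..<n} A \<in> sets (gauss_vec n)"
      using A setsH by (auto intro!: sets_PiM_I_finite simp del: sets_density)
    have "emeasure (density (gauss_vec n) E) (PiE {..<n} A) = (\<integral>\<^sup>+h. E h * indicator (PiE {..<n} A) h \<partial>gauss_vec n)"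
      using PA Em by (subst emeasure_density) (auto simp: nn_integral_set_ennreal)
    also have "\<dots> = (\<integral>\<^sup>+h. (\<Prod>i<n. ennreal (exp (a i * h i - (a i)^2/2)) * indicator (A i) (h i)) \<partial>gauss_vec n)"
    proof (intro nn_integral_cong)
      fix h assume "h \<in> space (gauss_vec n)"
      then have "indicator (PiE {..<n} A) h = (\<Prod>i<n. indicator (A i) (h i) :: ennreal)"
        unfolding space_gauss_vec by (auto simp: indicator_def PiE_iff)
      then show "E h * indicator (PiE {..<n} A) h = (\<Prod>i<n. ennreal (exp (a i * h i - (a i)^2/2)) * indicator (A i) (h i))"
        by (simp add: E_def prod.distrib)
    qed
    also have "\<dots> = (\<Prod>i<n. \<integral>\<^sup>+x. ennreal (exp (a i * x - (a i)^2/2)) * indicator (A i) x \<partial>GG)"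
      unfolding gauss_vec_def by (subst GP.product_nn_integral_prod) auto
    also have "\<dots> = (\<Prod>i<n. emeasure (H i) (A i))"
    proof (rule prod.cong[OF refl])
      fix i assume "i \<in> {..<n}"
      then have [measurable]: "A i \<in> sets borel" by simp
      have "(\<integral>\<^sup>+x. ennreal (exp (a i * x - (a i)^2/2)) * indicator (A i) x \<partial>GG)
          = (\<integral>\<^sup>+x. ennreal (std_normal_density x) * (ennreal (exp (a i * x - (a i)^2/2)) * indicator (A i) x) \<partial>lborel)"
        by (subst nn_integral_density) auto
      also have "\<dots> = (\<integral>\<^sup>+x. ennreal (normal_density (a i) 1 x) * indicator (A i) x \<partial>lborel)"
      proof (intro nn_integral_cong)
        fix x
        have "ennreal (std_normal_density x) * ennreal (exp (a i * x - (a i)^2/2))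
            = ennreal (std_normal_density x * exp (a i * x - (a i)^2/2))"
          by (rule ennreal_mult[symmetric]) auto
        also have "\<dots> = ennreal (normal_density (a i) 1 x)" by (rule arg_cong[where f=ennreal], rule dens_shift_eq)
        finally have e: "ennreal (std_normal_density x) * ennreal (exp (a i * x - (a i)^2/2)) = ennreal (normal_density (a i) 1 x)" .
        show "ennreal (std_normal_density x) * (ennreal (exp (a i * x - (a i)^2/2)) * indicator (A i) x)
            = ennreal (normal_density (a i) 1 x) * indicator (A i) x"
          by (simp only: mult.assoc[symmetric] e)
      qed
      also have "\<dots> = emeasure (H i) (A i)"
        unfolding H_def by (subst emeasure_density) (auto simp: nn_integral_set_ennreal mult.commute)
      finally show "(\<integral>\<^sup>+x. ennreal (exp (a i * x - (a i)^2/2)) * indicator (A i) x \<partial>GG) = emeasure (H i) (A i)" .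
    qed
    finally show "emeasure (density (gauss_vec n) E) (PiE {..<n} A) = (\<Prod>i\<in>{..<n}. emeasure (H i) (A i))"
      by simp
  qed simp
  show "distr (gauss_vec n) (gauss_vec n) S = density (gauss_vec n) E" using 1 2 by simp
qed



lemma gauss_shift_nn:
  fixes a :: "nat \<Rightarrow> real"
  assumes f[measurable]: "f \<in> borel_measurable (gauss_vec n)"
  shows "(\<integral>\<^sup>+h. f (restrict (\<lambda>i. h i + a i) {..<n}) \<partial>gauss_vec n)
       = (\<integral>\<^sup>+h. ennreal (exp ((\<Sum>i<n. a i * h i) - (\<Sum>i<n. (a i)^2)/2)) * f h \<partial>gauss_vec n)"
proof -
  note gm = gauss_shift_measure[where a=a and n=n]
  have "(\<integral>\<^sup>+h. f (restrict (\<lambda>i. h i + a i) {..<n}) \<partial>gauss_vec n)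
     = (\<integral>\<^sup>+h. f h \<partial>distr (gauss_vec n) (gauss_vec n) (\<lambda>h. restrict (\<lambda>i. h i + a i) {..<n}))"
    using gm(1) by (subst nn_integral_distr) auto
  also have "\<dots> = (\<integral>\<^sup>+h. (\<Prod>i<n. ennreal (exp (a i * h i - (a i)^2/2))) * f h \<partial>gauss_vec n)"
  proof -
    have Em: "(\<lambda>h. \<Prod>i<n. ennreal (exp (a i * h i - (a i)^2/2))) \<in> borel_measurable (gauss_vec n)"
      by measurable
    show ?thesis unfolding gm(2) by (rule nn_integral_density[OF Em f])
  qed
  also have "\<dots> = (\<integral>\<^sup>+h. ennreal (exp ((\<Sum>i<n. a i * h i) - (\<Sum>i<n. (a i)^2)/2)) * f h \<partial>gauss_vec n)"
  proof (intro nn_integral_cong)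
    fix h
    have "(\<Prod>i<n. ennreal (exp (a i * h i - (a i)^2/2))) = ennreal (\<Prod>i<n. exp (a i * h i - (a i)^2/2))"
      by (simp add: prod_ennreal)
    also have "(\<Prod>i<n. exp (a i * h i - (a i)^2/2)) = exp (\<Sum>i<n. a i * h i - (a i)^2/2)"
      by (simp add: exp_sum)
    also have "(\<Sum>i<n. a i * h i - (a i)^2/2) = (\<Sum>i<n. a i * h i) - (\<Sum>i<n. (a i)^2)/2"
      by (simp add: sum_subtractf sum_divide_distrib)
    finally show "(\<Prod>i<n. ennreal (exp (a i * h i - (a i)^2/2))) * f h = ennreal (exp ((\<Sum>i<n. a i * h i) - (\<Sum>i<n. (a i)^2)/2)) * f h"
      by simp
  qed
  finally show ?thesis .
qed

lemma exp_pair_ge: "2 * exp (- (w::real)) \<le> exp ((u::real) - w) + exp (- u - w)"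
proof -
  have "exp u + exp (-u) \<ge> 2" using exp_ge_add_one_self[of u] exp_ge_add_one_self[of "-u"] by linarith
  then have "2 * exp (-w) \<le> (exp u + exp (-u)) * exp (-w)" by simp
  also have "\<dots> = exp (u - w) + exp (- u - w)" by (simp add: distrib_right exp_add[symmetric])
  finally show ?thesis .
qed

lemma sum_indicator_le1:
  assumes "finite A" "\<And>a b. a \<in> A \<Longrightarrow> b \<in> A \<Longrightarrow> P a \<Longrightarrow> P b \<Longrightarrow> a = b"
  shows "(\<Sum>a\<in>A. (of_bool (P a) :: ennreal)) \<le> 1"
proof (cases "\<exists>a\<in>A. P a")
  case True
  then obtain a0 where a0: "a0 \<in> A" "P a0" by auto
  have "(\<Sum>a\<in>A. (of_bool (P a) :: ennreal)) = (\<Sum>a\<in>{a0}. (of_bool (P a) :: ennreal))"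
    using assms a0 by (intro sum.mono_neutral_right) auto
  then show ?thesis using a0 by simp
next
  case False
  then show ?thesis by simp
qed

lemma gauss_packing:
  fixes A :: "(nat \<Rightarrow> real) set" and K :: "(nat \<Rightarrow> real) set"
  assumes A: "finite A" and K[measurable]: "K \<in> sets (gauss_vec n)"
    and R: "\<And>a. a \<in> A \<Longrightarrow> (\<Sum>i<n. (a i)^2) \<le> R"
    and disj: "\<And>h a b. h \<in> space (gauss_vec n) \<Longrightarrow> a \<in> A \<Longrightarrow> b \<in> A \<Longrightarrow>
        restrict (\<lambda>i. h i + a i) {..<n} \<in> K \<Longrightarrow> restrict (\<lambda>i. h i + b i) {..<n} \<in> K \<Longrightarrow> a = b"
    and disj': "\<And>h a b. h \<in> space (gauss_vec n) \<Longrightarrow> a \<in> A \<Longrightarrow> b \<in> A \<Longrightarrow>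
        restrict (\<lambda>i. h i - a i) {..<n} \<in> K \<Longrightarrow> restrict (\<lambda>i. h i - b i) {..<n} \<in> K \<Longrightarrow> a = b"
  shows "real (card A) * exp (- R/2) * measure (gauss_vec n) K \<le> 1"
proof -
  interpret prob_space "gauss_vec n" by (rule prob_gauss_vec)
  let ?M = "gauss_vec n"
  let ?Sp = "\<lambda>a h. restrict (\<lambda>i. h i + a i) {..<n}"
  let ?Sm = "\<lambda>a h. restrict (\<lambda>i. h i - a i) {..<n}"
  have Sp_meas[measurable]: "?Sp a \<in> measurable ?M ?M" for a using gauss_shift_measure(1) .
  have Sm_meas[measurable]: "?Sm a \<in> measurable ?M ?M" for a using gauss_shift_measure(1)[where a="\<lambda>i. - a i" and n=n] by simp
  have ind_meas[measurable]: "indicator K \<in> borel_measurable ?M" by measurable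
  define F where "F = (\<lambda>h. \<Sum>a\<in>A. (indicator K (?Sp a h) + indicator K (?Sm a h) :: ennreal))"
  have "(\<integral>\<^sup>+h. F h \<partial>?M) \<le> (\<integral>\<^sup>+h. 2 \<partial>?M)"
  proof (intro nn_integral_mono)
    fix h assume h: "h \<in> space ?M"
    have "F h = (\<Sum>a\<in>A. (of_bool (?Sp a h \<in> K) :: ennreal)) + (\<Sum>a\<in>A. (of_bool (?Sm a h \<in> K) :: ennreal))"
      unfolding F_def by (simp add: sum.distrib indicator_def)
    also have "\<dots> \<le> 1 + 1"
    proof (intro add_mono sum_indicator_le1[OF A])
      show "\<And>a b. a \<in> A \<Longrightarrow> b \<in> A \<Longrightarrow> ?Sp a h \<in> K \<Longrightarrow> ?Sp b h \<in> K \<Longrightarrow> a = b"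
        using disj[OF h] by blast
      show "\<And>a b. a \<in> A \<Longrightarrow> b \<in> A \<Longrightarrow> ?Sm a h \<in> K \<Longrightarrow> ?Sm b h \<in> K \<Longrightarrow> a = b"
        using disj'[OF h] by simp
    qed
    finally show "F h \<le> 2" by simp
  qed
  also have "\<dots> = 2" using emeasure_space_1 by simp
  finally have F2: "(\<integral>\<^sup>+h. F h \<partial>?M) \<le> 2" .
  have "(\<integral>\<^sup>+h. F h \<partial>?M) = (\<Sum>a\<in>A. (\<integral>\<^sup>+h. indicator K (?Sp a h) \<partial>?M) + (\<integral>\<^sup>+h. indicator K (?Sm a h) \<partial>?M))"
    unfolding F_def by (subst nn_integral_sum) (auto intro!: sum.cong nn_integral_add)
  also have "\<dots> = (\<Sum>a\<in>A. (\<integral>\<^sup>+h. ennreal (exp ((\<Sum>i<n. a i * h i) - (\<Sum>i<n. (a i)^2)/2)) * indicator K h \<partial>?M)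
        + (\<integral>\<^sup>+h. ennreal (exp ((\<Sum>i<n. (- a i) * h i) - (\<Sum>i<n. (- a i)^2)/2)) * indicator K h \<partial>?M))"
    using gauss_shift_nn[OF ind_meas, where a="\<lambda>i. - a i" for a] gauss_shift_nn[OF ind_meas]
    by (intro sum.cong refl arg_cong2[where f="(+)"]) auto
  also have "\<dots> = (\<Sum>a\<in>A. (\<integral>\<^sup>+h. (ennreal (exp ((\<Sum>i<n. a i * h i) - (\<Sum>i<n. (a i)^2)/2))
        + ennreal (exp ((\<Sum>i<n. (- a i) * h i) - (\<Sum>i<n. (- a i)^2)/2))) * indicator K h \<partial>?M))"
    by (intro sum.cong refl, subst nn_integral_add[symmetric]) (auto simp: distrib_right)
  also have "\<dots> \<ge> (\<Sum>a\<in>A. (\<integral>\<^sup>+h. ennreal (2 * exp (- R/2)) * indicator K h \<partial>?M))"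
  proof (intro sum_mono nn_integral_mono)
    fix a h assume a: "a \<in> A"
    let ?u = "\<Sum>i<n. a i * h i" and ?w = "(\<Sum>i<n. (a i)^2)/2"
    have e1: "(\<Sum>i<n. (- a i) * h i) = - ?u" by (simp add: sum_negf)
    have e2: "(\<Sum>i<n. (- a i)^2) = (\<Sum>i<n. (a i)^2)" by simp
    have "2 * exp (- R/2) \<le> 2 * exp (- ?w)" using R[OF a] by simp
    also have "\<dots> \<le> exp (?u - ?w) + exp (- ?u - ?w)" by (rule exp_pair_ge)
    finally have "ennreal (2 * exp (- R/2)) \<le> ennreal (exp (?u - ?w)) + ennreal (exp (- ?u - ?w))"
      by (simp add: ennreal_plus[symmetric] del: ennreal_plus)
    then show "ennreal (2 * exp (- R/2)) * indicator K h \<le> (ennreal (exp (?u - ?w))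
        + ennreal (exp ((\<Sum>i<n. (- a i) * h i) - (\<Sum>i<n. (- a i)^2)/2))) * indicator K h"
      unfolding e1 e2 by (intro mult_right_mono) auto
  qed
  also have "(\<Sum>a\<in>A. (\<integral>\<^sup>+h. ennreal (2 * exp (- R/2)) * indicator K h \<partial>?M)) = of_nat (card A) * ennreal (2 * exp (- R/2)) * emeasure ?M K"
    by (simp add: nn_integral_cmult_indicator mult.assoc)
  finally have "of_nat (card A) * ennreal (2 * exp (- R/2)) * emeasure ?M K \<le> 2" using F2 by simp
  then have "ennreal (real (card A) * (2 * exp (- R/2)) * measure ?M K) \<le> ennreal 2"
    by (simp add: emeasure_eq_measure ennreal_mult' ennreal_of_nat_eq_real_of_nat)
  then have "real (card A) * (2 * exp (- R/2)) * measure ?M K \<le> 2"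
    by (subst (asm) ennreal_le_iff) auto
  then show ?thesis by simp
qed



definition psi :: "nat \<Rightarrow> (nat \<Rightarrow> real) set \<Rightarrow> (nat \<Rightarrow> real) \<Rightarrow> real" where
  "psi m T c = (SUP t\<in>T. \<bar>\<Sum>k<m. c k * t k\<bar>)"

locale Tbd =
  fixes m :: nat and T :: "(nat \<Rightarrow> real) set" and M :: real
  assumes Tne: "T \<noteq> {}" and Mnn: "0 \<le> M" and Tb: "\<And>t k. t \<in> T \<Longrightarrow> k < m \<Longrightarrow> \<bar>t k\<bar> \<le> M"
begin

lemma term_bound: "t \<in> T \<Longrightarrow> \<bar>\<Sum>k<m. c k * t k\<bar> \<le> M * (\<Sum>k<m. \<bar>c k\<bar>)"
proof -
  assume t: "t \<in> T"
  have "\<bar>\<Sum>k<m. c k * t k\<bar> \<le> (\<Sum>k<m. \<bar>c k * t k\<bar>)" by (rule sum_abs)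
  also have "\<dots> \<le> (\<Sum>k<m. M * \<bar>c k\<bar>)"
    using Tb[OF t] by (intro sum_mono) (simp add: abs_mult mult.commute[of M] mult_left_mono)
  finally show ?thesis by (simp add: sum_distrib_left)
qed

lemma bdd: "bdd_above ((\<lambda>t. \<bar>\<Sum>k<m. c k * t k\<bar>) ` T)"
  using term_bound by (intro bdd_aboveI2) blast

lemma psi_upper: "t \<in> T \<Longrightarrow> \<bar>\<Sum>k<m. c k * t k\<bar> \<le> psi m T c"
  unfolding psi_def by (rule cSUP_upper[OF _ bdd])

lemma psi_nonneg: "0 \<le> psi m T c"
proof -
  obtain t where "t \<in> T" using Tne by auto
  then show ?thesis using psi_upper[of t c] by linarith
qed

lemma psi_least: "(\<And>t. t \<in> T \<Longrightarrow> \<bar>\<Sum>k<m. c k * t k\<bar> \<le> B) \<Longrightarrow> psi m T c \<le> B"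
  unfolding psi_def by (rule cSUP_least[OF Tne])

lemma psi_lip: "psi m T c \<le> psi m T d + M * (\<Sum>k<m. \<bar>c k - d k\<bar>)"
proof (rule psi_least)
  fix t assume t: "t \<in> T"
  have "(\<Sum>k<m. c k * t k) = (\<Sum>k<m. d k * t k) + (\<Sum>k<m. (c k - d k) * t k)"
    by (simp add: sum.distrib[symmetric] algebra_simps)
  then have "\<bar>\<Sum>k<m. c k * t k\<bar> \<le> \<bar>\<Sum>k<m. d k * t k\<bar> + \<bar>\<Sum>k<m. (c k - d k) * t k\<bar>" by simp
  also have "\<dots> \<le> psi m T d + M * (\<Sum>k<m. \<bar>c k - d k\<bar>)"
    using psi_upper[OF t, of d] term_bound[OF t, of "\<lambda>k. c k - d k"] by simp
  finally show "\<bar>\<Sum>k<m. c k * t k\<bar> \<le> psi m T d + M * (\<Sum>k<m. \<bar>c k - d k\<bar>)" .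
qed

lemma psi_zero: "psi m T (\<lambda>k. 0) = 0"
  using psi_nonneg[of "\<lambda>k. 0"] by (intro antisym psi_least) auto

lemma psi_bound: "psi m T c \<le> M * (\<Sum>k<m. \<bar>c k\<bar>)"
  using psi_lip[of c "\<lambda>k. 0"] psi_zero by simp

lemma psi_add: "psi m T (\<lambda>k. c k + d k) \<le> psi m T c + psi m T d"
proof (rule psi_least)
  fix t assume t: "t \<in> T"
  have "\<bar>\<Sum>k<m. (c k + d k) * t k\<bar> = \<bar>(\<Sum>k<m. c k * t k) + (\<Sum>k<m. d k * t k)\<bar>"
    by (simp add: sum.distrib[symmetric] algebra_simps)
  also have "\<dots> \<le> psi m T c + psi m T d"
    using psi_upper[OF t, of c] psi_upper[OF t, of d] by linarith
  finally show "\<bar>\<Sum>k<m. (c k + d k) * t k\<bar> \<le> psi m T c + psi m T d" .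
qed

lemma psi_scale_le: "psi m T (\<lambda>k. r * c k) \<le> \<bar>r\<bar> * psi m T c"
proof (rule psi_least)
  fix t assume t: "t \<in> T"
  have "\<bar>\<Sum>k<m. r * c k * t k\<bar> = \<bar>r\<bar> * \<bar>\<Sum>k<m. c k * t k\<bar>"
    by (simp add: sum_distrib_left[symmetric] abs_mult mult.assoc)
  also have "\<dots> \<le> \<bar>r\<bar> * psi m T c" using psi_upper[OF t, of c] by (simp add: mult_left_mono)
  finally show "\<bar>\<Sum>k<m. r * c k * t k\<bar> \<le> \<bar>r\<bar> * psi m T c" .
qed

lemma psi_scale: "psi m T (\<lambda>k. r * c k) = \<bar>r\<bar> * psi m T c"
proof (cases "r = 0")
  case True then show ?thesis using psi_zero by simp
next
  case False
  have "psi m T c = psi m T (\<lambda>k. (1/r) * (r * c k))" using False by simp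
  also have "\<dots> \<le> \<bar>1/r\<bar> * psi m T (\<lambda>k. r * c k)" by (rule psi_scale_le)
  finally have "\<bar>r\<bar> * psi m T c \<le> psi m T (\<lambda>k. r * c k)"
    using False by (simp add: field_simps)
  then show ?thesis using psi_scale_le[of r c] by linarith
qed

definition vq :: "rat list \<Rightarrow> nat \<Rightarrow> real" where
  "vq xs = (\<lambda>k. if k < length xs then of_rat (xs ! k) else 0)"

lemma vq_dense: assumes "0 < e" shows "\<exists>xs. \<forall>k<m. \<bar>c k - vq xs k\<bar> < e"
proof -
  have "\<forall>k. \<exists>q::rat. c k - e < of_rat q \<and> of_rat q < c k + e"
    using assms by (intro allI of_rat_dense) simp
  then obtain Q where Q: "\<And>k. c k - e < of_rat (Q k) \<and> of_rat (Q k) < c k + e" by metis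
  define xs where "xs = map Q [0..<m]"
  have "\<forall>k<m. \<bar>c k - vq xs k\<bar> < e"
    using Q by (auto simp: vq_def xs_def abs_less_iff) (smt (verit) Q)+
  then show ?thesis by blast
qed

lemma psi_inf: "psi m T c = (INF xs. psi m T (vq xs) + M * (\<Sum>k<m. \<bar>c k - vq xs k\<bar>))"
proof (rule antisym)
  show "psi m T c \<le> (INF xs. psi m T (vq xs) + M * (\<Sum>k<m. \<bar>c k - vq xs k\<bar>))"
    by (rule cINF_greatest) (auto intro: psi_lip)
  show "(INF xs. psi m T (vq xs) + M * (\<Sum>k<m. \<bar>c k - vq xs k\<bar>)) \<le> psi m T c"
  proof (rule field_le_epsilon)
    fix e :: real assume e: "0 < e"
    define d where "d = e / (2 * M * real m + 1)"
    have d: "0 < d" using e Mnn by (simp add: d_def add_nonneg_pos)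
    obtain xs where xs: "\<And>k. k < m \<Longrightarrow> \<bar>c k - vq xs k\<bar> < d" using vq_dense[OF d] by blast
    have S: "(\<Sum>k<m. \<bar>c k - vq xs k\<bar>) \<le> real m * d"
      using sum_mono[of "{..<m}" "\<lambda>k. \<bar>c k - vq xs k\<bar>" "\<lambda>k. d"] xs by (simp add: less_imp_le)
    have S': "(\<Sum>k<m. \<bar>vq xs k - c k\<bar>) \<le> real m * d" using S by (simp add: abs_minus_commute)
    have "(INF xs. psi m T (vq xs) + M * (\<Sum>k<m. \<bar>c k - vq xs k\<bar>)) \<le> psi m T (vq xs) + M * (\<Sum>k<m. \<bar>c k - vq xs k\<bar>)"
      by (rule cINF_lower) (auto intro!: bdd_belowI2[where m="psi m T c"] psi_lip)
    also have "\<dots> \<le> psi m T c + M * (real m * d) + M * (real m * d)"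
      using psi_lip[of "vq xs" c] S S' Mnn by (smt (verit, best) mult_left_mono)
    also have "\<dots> = psi m T c + (2 * M * real m) * d" by simp
    also have "\<dots> \<le> psi m T c + e"
    proof -
      have "(2 * M * real m) * d \<le> (2 * M * real m + 1) * d" using d by simp
      also have "\<dots> = e" using Mnn
        by (simp add: d_def) (metis add_nonneg_pos mult_nonneg_nonneg of_nat_0_le_iff zero_less_one less_irrefl zero_le_numeral)
      finally show ?thesis by simp
    qed
    finally show "(INF xs. psi m T (vq xs) + M * (\<Sum>k<m. \<bar>c k - vq xs k\<bar>)) \<le> psi m T c + e" .
  qed
qed

lemma psi_meas:
  assumes [measurable]: "\<And>k. c k \<in> borel_measurable N"
  shows "(\<lambda>x. psi m T (\<lambda>k. c k x)) \<in> borel_measurable N"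
proof -
  have "(\<lambda>x. INF xs. psi m T (vq xs) + M * (\<Sum>k<m. \<bar>c k x - vq xs k\<bar>)) \<in> borel_measurable N"
    by (rule borel_measurable_cINF_real) auto
  then show ?thesis by (subst psi_inf) simp
qed

end


lemma meas_to_GG: "f \<in> borel_measurable N \<Longrightarrow> f \<in> measurable N GG"
  by (simp add: measurable_cong_sets[OF refl sets_density] measurable_cong_sets[OF refl sets_lborel])

lemma gauss_abs_int: assumes True: "i < n" shows "integrable (gauss_vec n) (\<lambda>g. \<bar>g i\<bar>)"
proof -
  have D: "distr (gauss_vec n) GG (\<lambda>g. g i) = GG"
    unfolding gauss_vec_def by (rule distr_PiM_component) (use True prob_GG in auto)
  have "integrable lborel (\<lambda>x. std_normal_density x * \<bar>x\<bar> ^ (2 * 0 + 1))"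
    using std_normal_moment_abs_odd[of 0] by (simp add: has_bochner_integral_iff)
  then have "integrable lborel (\<lambda>x. std_normal_density x *\<^sub>R \<bar>x\<bar>)" by simp
  then have "integrable GG (\<lambda>x. \<bar>x\<bar>)"
    by (subst integrable_density) auto
  then have "integrable (distr (gauss_vec n) GG (\<lambda>g. g i)) (\<lambda>x. \<bar>x\<bar>)" unfolding D .
  then show ?thesis
  proof (subst (asm) integrable_distr_eq)
    show "(\<lambda>g. g i) \<in> measurable (gauss_vec n) GG" by (rule meas_to_GG) simp
    show "(\<lambda>x. \<bar>x\<bar>) \<in> borel_measurable GG" by simp
  qed simp
qed

definition cf :: "nat \<Rightarrow> (nat \<Rightarrow> nat \<Rightarrow> nat \<Rightarrow> real) \<Rightarrow> (nat \<Rightarrow> real) \<Rightarrow> (nat \<Rightarrow> real) \<Rightarrow> nat \<Rightarrow> real" where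
  "cf n a g y = (\<lambda>k. \<Sum>i<n. \<Sum>j<n. a i j k * g i * y j)"

lemma sum_rearr:
  fixes X :: "nat \<Rightarrow> nat \<Rightarrow> nat \<Rightarrow> real"
  shows "(\<Sum>i<n. \<Sum>j<n. \<Sum>k<m. X i j k * t k) = (\<Sum>k<m. (\<Sum>i<n. \<Sum>j<n. X i j k) * t k)"
proof -
  have "(\<Sum>i<n. \<Sum>j<n. \<Sum>k<m. X i j k * t k) = (\<Sum>i<n. \<Sum>k<m. \<Sum>j<n. X i j k * t k)"
    by (rule sum.cong[OF refl]) (rule sum.swap)
  also have "\<dots> = (\<Sum>k<m. \<Sum>i<n. \<Sum>j<n. X i j k * t k)" by (rule sum.swap)
  finally show ?thesis by (simp add: sum_distrib_right)
qed

lemma sup_eq: "(SUP t\<in>T. \<bar>\<Sum>i<n. \<Sum>j<n. \<Sum>k<m. a i j k * g i * x j * t k\<bar>) = psi m T (cf n a g x)"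
  unfolding psi_def cf_def using sum_rearr[where n=n and m=m and X="\<lambda>i j k. a i j k * g i * x j"] by simp

lemma cf_add: "cf n a g (\<lambda>j. y j + z j) = (\<lambda>k. cf n a g y k + cf n a g z k)"
  by (simp add: cf_def distrib_left sum.distrib)

lemma cf_scale: "cf n a g (\<lambda>j. r * y j) = (\<lambda>k. r * cf n a g y k)"
  by (simp add: cf_def sum_distrib_left mult_ac)

lemma cf_cong: "(\<And>j. j < n \<Longrightarrow> y j = z j) \<Longrightarrow> cf n a g y = cf n a g z"
  by (simp add: cf_def)

lemma cf_abs: "\<bar>cf n a g y k\<bar> \<le> (\<Sum>i<n. \<Sum>j<n. \<bar>a i j k\<bar> * \<bar>y j\<bar> * \<bar>g i\<bar>)"
  unfolding cf_def
  by (rule order.trans[OF sum_abs], rule sum_mono, rule order.trans[OF sum_abs]) (simp add: abs_mult mult_ac)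

locale Bset = Tbd +
  fixes n :: nat and a :: "nat \<Rightarrow> nat \<Rightarrow> nat \<Rightarrow> real"
begin

abbreviation "\<gamma> \<equiv> gauss_vec n"

definition beta :: "(nat \<Rightarrow> real) \<Rightarrow> real" where
  "beta y = (\<integral>g. psi m T (cf n a g y) \<partial>\<gamma>)"

lemma betaAT_eq: "betaAT n m a T y = beta y"
  unfolding betaAT_def beta_def sup_eq ..

lemma cf_meas[measurable]: "(\<lambda>g. cf n a g y k) \<in> borel_measurable \<gamma>"
  unfolding cf_def by measurable

lemma Phi_meas[measurable]: "(\<lambda>g. psi m T (cf n a g y)) \<in> borel_measurable \<gamma>"
  using psi_meas[of "\<lambda>k g. cf n a g y k" \<gamma>] by simp

lemma Phi_int: "integrable \<gamma> (\<lambda>g. psi m T (cf n a g y))"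
proof (rule Bochner_Integration.integrable_bound)
  show "integrable \<gamma> (\<lambda>g. M * (\<Sum>k<m. \<Sum>i<n. \<Sum>j<n. \<bar>a i j k\<bar> * \<bar>y j\<bar> * \<bar>g i\<bar>))"
  proof -
    have "integrable \<gamma> (\<lambda>g. \<Sum>k<m. \<Sum>i<n. \<Sum>j<n. \<bar>a i j k\<bar> * \<bar>y j\<bar> * \<bar>g i\<bar>)"
      by (rule Bochner_Integration.integrable_sum, rule Bochner_Integration.integrable_sum, rule Bochner_Integration.integrable_sum, rule Bochner_Integration.integrable_mult_right,
          rule gauss_abs_int) auto
    then show ?thesis by simp
  qed
  show "AE g in \<gamma>. norm (psi m T (cf n a g y)) \<le> norm (M * (\<Sum>k<m. \<Sum>i<n. \<Sum>j<n. \<bar>a i j k\<bar> * \<bar>y j\<bar> * \<bar>g i\<bar>))"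
  proof (intro AE_I2)
    fix g
    have "psi m T (cf n a g y) \<le> M * (\<Sum>k<m. \<bar>cf n a g y k\<bar>)" by (rule psi_bound)
    also have "\<dots> \<le> M * (\<Sum>k<m. \<Sum>i<n. \<Sum>j<n. \<bar>a i j k\<bar> * \<bar>y j\<bar> * \<bar>g i\<bar>)"
      using Mnn by (intro mult_left_mono sum_mono cf_abs) auto
    finally show "norm (psi m T (cf n a g y)) \<le> norm (M * (\<Sum>k<m. \<Sum>i<n. \<Sum>j<n. \<bar>a i j k\<bar> * \<bar>y j\<bar> * \<bar>g i\<bar>))"
      using psi_nonneg by simp
  qed
qed simp

lemma beta_nonneg: "0 \<le> beta y"
  unfolding beta_def by (intro integral_nonneg_AE AE_I2 psi_nonneg)

lemma beta_add: "beta (\<lambda>j. y j + z j) \<le> beta y + beta z"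
proof -
  have "beta (\<lambda>j. y j + z j) \<le> (\<integral>g. psi m T (cf n a g y) + psi m T (cf n a g z) \<partial>\<gamma>)"
    unfolding beta_def
    using Phi_int[of "\<lambda>j. y j + z j"] Bochner_Integration.integrable_add[OF Phi_int[of y] Phi_int[of z]]
    by (intro integral_mono) (auto simp: cf_add intro: psi_add[of "cf n a _ y" "cf n a _ z", simplified])
  also have "\<dots> = beta y + beta z" unfolding beta_def by (rule Bochner_Integration.integral_add[OF Phi_int Phi_int])
  finally show ?thesis .
qed

lemma beta_scale: "beta (\<lambda>j. r * y j) = \<bar>r\<bar> * beta y"
  unfolding beta_def cf_scale psi_scale by simp

lemma beta_cong: "(\<And>j. j < n \<Longrightarrow> y j = z j) \<Longrightarrow> beta y = beta z"
  unfolding beta_def using cf_cong[where y=y and z=z and n=n] by simp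

lemma beta_neg: "beta (\<lambda>j. - y j) = beta y"
  using beta_scale[of "-1" y] by simp

lemma beta_zero: "beta (\<lambda>j. 0) = 0"
  using beta_scale[of 0 "\<lambda>j. 0"] by simp

lemma beta_tri: "beta (x - z) \<le> beta (x - y) + beta (y - z)"
proof -
  have "x - z = (\<lambda>j. (x - y) j + (y - z) j)" by (simp add: fun_eq_iff)
  then show ?thesis using beta_add[of "x - y" "y - z"] by simp
qed

lemma beta_swap: "beta (x - y) = beta (y - x)"
proof -
  have "y - x = (\<lambda>j. - (x - y) j)" by (simp add: fun_eq_iff)
  then show ?thesis using beta_neg[of "x - y"] by simp
qed

end


context Bset
begin

lemma Phi_le: "psi m T (cf n a g y) \<le> M * (\<Sum>k<m. \<Sum>i<n. \<Sum>j<n. \<bar>a i j k\<bar> * \<bar>y j\<bar> * \<bar>g i\<bar>)"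
proof -
  have "psi m T (cf n a g y) \<le> M * (\<Sum>k<m. \<bar>cf n a g y k\<bar>)" by (rule psi_bound)
  also have "\<dots> \<le> M * (\<Sum>k<m. \<Sum>i<n. \<Sum>j<n. \<bar>a i j k\<bar> * \<bar>y j\<bar> * \<bar>g i\<bar>)"
    using Mnn by (intro mult_left_mono sum_mono cf_abs) auto
  finally show ?thesis .
qed

lemma sum3_int:
  fixes c :: "nat \<Rightarrow> nat \<Rightarrow> nat \<Rightarrow> real"
  shows "integrable \<gamma> (\<lambda>g. \<Sum>k<m. \<Sum>i<n. \<Sum>j<n. c k i j * \<bar>g i\<bar>)"
  by (rule Bochner_Integration.integrable_sum, rule Bochner_Integration.integrable_sum,
      rule Bochner_Integration.integrable_sum, rule Bochner_Integration.integrable_mult_right,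
      rule gauss_abs_int) auto

lemma sum3_int':
  fixes c :: "nat \<Rightarrow> nat \<Rightarrow> nat \<Rightarrow> real"
  shows "integrable \<gamma> (\<lambda>g. \<Sum>k<m. \<Sum>i<n. \<Sum>j<n. c k i j * \<bar>g j\<bar>)"
  by (rule Bochner_Integration.integrable_sum, rule Bochner_Integration.integrable_sum,
      rule Bochner_Integration.integrable_sum, rule Bochner_Integration.integrable_mult_right,
      rule gauss_abs_int) auto

lemma sum3_integral:
  fixes c :: "nat \<Rightarrow> nat \<Rightarrow> nat \<Rightarrow> real"
  shows "(\<integral>g. (\<Sum>k<m. \<Sum>i<n. \<Sum>j<n. c k i j * \<bar>g i\<bar>) \<partial>\<gamma>) = (\<Sum>k<m. \<Sum>i<n. \<Sum>j<n. c k i j * (\<integral>g. \<bar>g i\<bar> \<partial>\<gamma>))"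
proof -
  have "(\<integral>g. (\<Sum>k<m. \<Sum>i<n. \<Sum>j<n. c k i j * \<bar>g i\<bar>) \<partial>\<gamma>) = (\<Sum>k<m. (\<integral>g. (\<Sum>i<n. \<Sum>j<n. c k i j * \<bar>g i\<bar>) \<partial>\<gamma>))"
    by (rule Bochner_Integration.integral_sum, rule Bochner_Integration.integrable_sum,
      rule Bochner_Integration.integrable_sum, rule Bochner_Integration.integrable_mult_right,
      rule gauss_abs_int) auto
  also have "\<dots> = (\<Sum>k<m. \<Sum>i<n. (\<integral>g. (\<Sum>j<n. c k i j * \<bar>g i\<bar>) \<partial>\<gamma>))"
    by (rule sum.cong[OF refl], rule Bochner_Integration.integral_sum,
      rule Bochner_Integration.integrable_sum, rule Bochner_Integration.integrable_mult_right,
      rule gauss_abs_int) auto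
  also have "\<dots> = (\<Sum>k<m. \<Sum>i<n. \<Sum>j<n. (\<integral>g. c k i j * \<bar>g i\<bar> \<partial>\<gamma>))"
    by (rule sum.cong[OF refl], rule sum.cong[OF refl], rule Bochner_Integration.integral_sum,
      rule Bochner_Integration.integrable_mult_right, rule gauss_abs_int) auto
  also have "\<dots> = (\<Sum>k<m. \<Sum>i<n. \<Sum>j<n. c k i j * (\<integral>g. \<bar>g i\<bar> \<partial>\<gamma>))"
    by simp
  finally show ?thesis .
qed

definition Eg :: "nat \<Rightarrow> real" where "Eg i = (\<integral>g. \<bar>g i\<bar> \<partial>\<gamma>)"

lemma beta_le: "beta y \<le> M * (\<Sum>k<m. \<Sum>i<n. \<Sum>j<n. \<bar>a i j k\<bar> * Eg i * \<bar>y j\<bar>)"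
proof -
  have "beta y \<le> (\<integral>g. M * (\<Sum>k<m. \<Sum>i<n. \<Sum>j<n. (\<bar>a i j k\<bar> * \<bar>y j\<bar>) * \<bar>g i\<bar>) \<partial>\<gamma>)"
    unfolding beta_def
    by (rule integral_mono[OF Phi_int]) (use sum3_int Phi_le in auto)
  also have "\<dots> = M * (\<Sum>k<m. \<Sum>i<n. \<Sum>j<n. (\<bar>a i j k\<bar> * \<bar>y j\<bar>) * Eg i)"
    by (simp only: integral_mult_right_zero sum3_integral Eg_def)
  also have "\<dots> = M * (\<Sum>k<m. \<Sum>i<n. \<Sum>j<n. \<bar>a i j k\<bar> * Eg i * \<bar>y j\<bar>)"
    by (simp add: mult_ac)
  finally show ?thesis .
qed

lemma Phi2_meas: "(\<lambda>x. psi m T (cf n a (fst x) (snd x))) \<in> borel_measurable (\<gamma> \<Otimes>\<^sub>M \<gamma>)"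
proof -
  have "(\<lambda>x. cf n a (fst x) (snd x) k) \<in> borel_measurable (\<gamma> \<Otimes>\<^sub>M \<gamma>)" for k
    unfolding cf_def by measurable
  then show ?thesis using psi_meas[of "\<lambda>k x. cf n a (fst x) (snd x) k" "\<gamma> \<Otimes>\<^sub>M \<gamma>"] by simp
qed

lemma Phi3_meas: "(\<lambda>x. psi m T (cf n a (snd x) (fst x))) \<in> borel_measurable (\<gamma> \<Otimes>\<^sub>M \<gamma>)"
proof -
  have "(\<lambda>x. cf n a (snd x) (fst x) k) \<in> borel_measurable (\<gamma> \<Otimes>\<^sub>M \<gamma>)" for k
    unfolding cf_def by measurable
  then show ?thesis using psi_meas[of "\<lambda>k x. cf n a (snd x) (fst x) k" "\<gamma> \<Otimes>\<^sub>M \<gamma>"] by simp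
qed

lemma beta_meas[measurable]: "beta \<in> borel_measurable \<gamma>"
proof -
  interpret S: sigma_finite_measure \<gamma> by (rule prob_space_imp_sigma_finite[OF prob_gauss_vec])
  have "case_prod (\<lambda>h g. psi m T (cf n a g h)) \<in> borel_measurable (\<gamma> \<Otimes>\<^sub>M \<gamma>)"
    using Phi3_meas by (simp add: split_beta')
  then have "(\<lambda>h. \<integral>g. psi m T (cf n a g h) \<partial>\<gamma>) \<in> borel_measurable \<gamma>"
    by (rule S.borel_measurable_lebesgue_integral)
  then show ?thesis unfolding beta_def[abs_def] .
qed

lemma beta_int: "integrable \<gamma> beta"
proof (rule Bochner_Integration.integrable_bound)
  show "integrable \<gamma> (\<lambda>y. M * (\<Sum>k<m. \<Sum>i<n. \<Sum>j<n. \<bar>a i j k\<bar> * Eg i * \<bar>y j\<bar>))"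
    using sum3_int'[of "\<lambda>k i j. \<bar>a i j k\<bar> * Eg i"] by simp
  show "AE y in \<gamma>. norm (beta y) \<le> norm (M * (\<Sum>k<m. \<Sum>i<n. \<Sum>j<n. \<bar>a i j k\<bar> * Eg i * \<bar>y j\<bar>))"
    using beta_le beta_nonneg by (intro AE_I2) (smt (verit) real_norm_def)
qed simp

lemma sAT_eq: "sAT n m a T = (\<integral>h. beta h \<partial>\<gamma>)"
proof -
  interpret P: pair_sigma_finite \<gamma> \<gamma>
    unfolding pair_sigma_finite_def using prob_space_imp_sigma_finite[OF prob_gauss_vec] by simp
  have "sAT n m a T = (\<integral>x. psi m T (cf n a (fst x) (snd x)) \<partial>(\<gamma> \<Otimes>\<^sub>M \<gamma>))"
    unfolding sAT_def sup_eq ..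
  also have "\<dots> = enn2real (\<integral>\<^sup>+x. ennreal (psi m T (cf n a (fst x) (snd x))) \<partial>(\<gamma> \<Otimes>\<^sub>M \<gamma>))"
    by (rule integral_eq_nn_integral[OF Phi2_meas]) (simp add: psi_nonneg)
  also have "(\<integral>\<^sup>+x. ennreal (psi m T (cf n a (fst x) (snd x))) \<partial>(\<gamma> \<Otimes>\<^sub>M \<gamma>))
      = (\<integral>\<^sup>+h. (\<integral>\<^sup>+g. ennreal (psi m T (cf n a g h)) \<partial>\<gamma>) \<partial>\<gamma>)"
    using P.nn_integral_snd[of "\<lambda>x. ennreal (psi m T (cf n a (fst x) (snd x)))"] Phi2_meas by simp
  also have "\<dots> = (\<integral>\<^sup>+h. ennreal (beta h) \<partial>\<gamma>)"
    unfolding beta_def by (intro nn_integral_cong nn_integral_eq_integral Phi_int) (simp add: psi_nonneg)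
  also have "enn2real \<dots> = (\<integral>h. beta h \<partial>\<gamma>)"
    by (rule integral_eq_nn_integral[symmetric]) (auto simp: beta_nonneg)
  finally show ?thesis .
qed

end


context Bset
begin

abbreviation "s \<equiv> sAT n m a T"

lemma s_nonneg: "0 \<le> s"
  unfolding sAT_eq by (intro integral_nonneg_AE AE_I2 beta_nonneg)

lemma K_meas: "{h \<in> space \<gamma>. beta h \<le> t} \<in> sets \<gamma>"
  by measurable

lemma K_big: "measure \<gamma> {h \<in> space \<gamma>. beta h \<le> 3 * s} \<ge> 2/3"
proof -
  interpret prob_space \<gamma> by (rule prob_gauss_vec)
  show ?thesis
  proof (cases "s = 0")
    case True
    then have "AE h in \<gamma>. beta h = 0"
      using integral_nonneg_eq_0_iff_AE[OF beta_int] beta_nonneg sAT_eq by simp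
    then have "AE h in \<gamma>. h \<in> {h \<in> space \<gamma>. beta h \<le> 3 * s}"
      using AE_space by eventually_elim (simp add: True)
    then have "measure \<gamma> {h \<in> space \<gamma>. beta h \<le> 3 * s} = 1"
      using prob_eq_1[OF K_meas] by simp
    then show ?thesis by simp
  next
    case False
    then have sp: "0 < s" using s_nonneg by simp
    have Mk: "measure \<gamma> {h \<in> space \<gamma>. beta h \<ge> 3 * s} \<le> (\<integral>h. beta h \<partial>\<gamma>) / (3 * s)"
      by (rule integral_Markov_inequality_measure[OF beta_int, where A="space \<gamma>"]) (use sp beta_nonneg in auto)
    also have "\<dots> = 1/3" using sp sAT_eq by simp
    finally have Mk': "measure \<gamma> {h \<in> space \<gamma>. beta h \<ge> 3 * s} \<le> 1/3" .
    have "{h \<in> space \<gamma>. beta h \<le> 3 * s} = space \<gamma> - {h \<in> space \<gamma>. 3 * s < beta h}" by auto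
    then have "measure \<gamma> {h \<in> space \<gamma>. beta h \<le> 3 * s} = 1 - measure \<gamma> {h \<in> space \<gamma>. 3 * s < beta h}"
      by (simp add: prob_compl)
    moreover have "measure \<gamma> {h \<in> space \<gamma>. 3 * s < beta h} \<le> measure \<gamma> {h \<in> space \<gamma>. beta h \<ge> 3 * s}"
      by (intro finite_measure_mono) auto
    ultimately show ?thesis using Mk' by simp
  qed
qed

lemma beta_restrict: "beta (restrict f {..<n}) = beta f"
  by (rule beta_cong) simp

lemma card_bound:
  assumes r: "0 < r" and P: "finite P" "\<And>p. p \<in> P \<Longrightarrow> (\<Sum>j<n. (p j)^2) \<le> 1"
    and sep: "\<And>p q. p \<in> P \<Longrightarrow> q \<in> P \<Longrightarrow> p \<noteq> q \<Longrightarrow> r powr (-1/2) * s / 2 < beta (p - q)"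
  shows "real (card P) \<le> 3/2 * exp (72 * r)"
proof -
  define lam where "lam = 12 * sqrt r"
  define t where "t = 3 * s"
  define K where "K = {h \<in> space \<gamma>. beta h \<le> t}"
  have lam: "0 < lam" using r by (simp add: lam_def)
  have lamd: "lam * (r powr (-1/2) * s / 2) = 2 * t"
  proof -
    have "r powr (-1/2) = 1 / sqrt r" using r by (simp add: powr_minus_divide powr_half_sqrt)
    then show ?thesis using r by (simp add: lam_def t_def)
  qed
  define sc where "sc = (\<lambda>p::nat \<Rightarrow> real. \<lambda>j. lam * p j)"
  define A where "A = sc ` P"
  have inj: "inj_on sc P"
    using lam by (auto simp: inj_on_def sc_def fun_eq_iff)
  have cardA: "card A = card P" unfolding A_def using inj by (simp add: card_image)
  have key: "beta (x - y) \<le> 2 * t" if "beta x \<le> t" "beta y \<le> t" for x y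
  proof -
    have "beta (x - y) \<le> beta (x - (\<lambda>j. 0)) + beta ((\<lambda>j. 0) - y)" by (rule beta_tri)
    also have "beta (x - (\<lambda>j. 0)) = beta x" by (simp add: fun_diff_def)
    also have "beta ((\<lambda>j. 0) - y) = beta y" using beta_neg[of y] by (simp add: fun_diff_def)
    finally have "beta (x - y) \<le> beta x + beta y" .
    then show ?thesis using that by linarith
  qed
  have sc_diff: "sc p - sc q = (\<lambda>j. lam * (p - q) j)" for p q by (simp add: sc_def fun_eq_iff algebra_simps)
  have eqpq: "p = q" if "p \<in> P" "q \<in> P" "beta (sc p - sc q) \<le> 2 * t" for p q
  proof (rule ccontr)
    assume "p \<noteq> q"
    then have "r powr (-1/2) * s / 2 < beta (p - q)" using sep that by simp
    then have "lam * (r powr (-1/2) * s / 2) < lam * beta (p - q)" using lam by simp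
    also have "lam * beta (p - q) = beta (sc p - sc q)" unfolding sc_diff beta_scale using lam by (simp add: fun_diff_def)
    finally show False using that lamd by simp
  qed
  have "real (card A) * exp (- (lam^2)/2) * measure \<gamma> K \<le> 1"
  proof (rule gauss_packing)
    show "finite A" unfolding A_def using P by simp
    show "K \<in> sets \<gamma>" unfolding K_def by (rule K_meas)
    show "(\<Sum>i<n. (b i)^2) \<le> lam^2" if bA: "b \<in> A" for b
    proof -
      obtain p where p: "p \<in> P" "b = sc p" using bA A_def by auto
      have "(\<Sum>i<n. (b i)^2) = lam^2 * (\<Sum>i<n. (p i)^2)" by (simp add: p sc_def power_mult_distrib sum_distrib_left)
      also have "\<dots> \<le> lam^2" using P(2)[OF p(1)] by (simp add: mult_left_le)
      finally show ?thesis .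
    qed
    show "b = c" if H: "h \<in> space \<gamma>" "b \<in> A" "c \<in> A" "restrict (\<lambda>i. h i + b i) {..<n} \<in> K"
      "restrict (\<lambda>i. h i + c i) {..<n} \<in> K" for h b c
    proof -
      obtain p q where pq: "p \<in> P" "q \<in> P" "b = sc p" "c = sc q" using H A_def by auto
      have "beta (\<lambda>i. h i + b i) \<le> t" "beta (\<lambda>i. h i + c i) \<le> t"
        using H beta_restrict unfolding K_def by auto
      then have "beta ((\<lambda>i. h i + b i) - (\<lambda>i. h i + c i)) \<le> 2 * t" by (rule key)
      moreover have "(\<lambda>i. h i + b i) - (\<lambda>i. h i + c i) = sc p - sc q" using pq by (simp add: fun_eq_iff)
      ultimately have "beta (sc p - sc q) \<le> 2 * t" by simp
      then have "p = q" by (rule eqpq[OF pq(1,2)])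
      then show ?thesis using pq by simp
    qed
    show "b = c" if H: "h \<in> space \<gamma>" "b \<in> A" "c \<in> A" "restrict (\<lambda>i. h i - b i) {..<n} \<in> K"
      "restrict (\<lambda>i. h i - c i) {..<n} \<in> K" for h b c
    proof -
      obtain p q where pq: "p \<in> P" "q \<in> P" "b = sc p" "c = sc q" using H A_def by auto
      have "beta (\<lambda>i. h i - c i) \<le> t" "beta (\<lambda>i. h i - b i) \<le> t"
        using H beta_restrict unfolding K_def by auto
      then have "beta ((\<lambda>i. h i - c i) - (\<lambda>i. h i - b i)) \<le> 2 * t" by (rule key)
      moreover have "(\<lambda>i. h i - c i) - (\<lambda>i. h i - b i) = sc p - sc q" using pq by (simp add: fun_eq_iff)
      ultimately have "beta (sc p - sc q) \<le> 2 * t" by simp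
      then have "p = q" by (rule eqpq[OF pq(1,2)])
      then show ?thesis using pq by simp
    qed
  qed
  note X = this
  have lam2: "lam^2 = 144 * r" using r by (simp add: lam_def power_mult_distrib)
  have K2: "measure \<gamma> K \<ge> 2/3" unfolding K_def t_def by (rule K_big)
  have e: "exp (- (lam^2)/2) = exp (- 72 * r)" using lam2 by simp
  have ce: "0 \<le> real (card P) * exp (- 72 * r)" by simp
  have "real (card P) * exp (- 72 * r) * (2/3) \<le> real (card P) * exp (- 72 * r) * measure \<gamma> K"
    by (rule mult_left_mono[OF K2 ce])
  also have "\<dots> \<le> 1" using X cardA e by simp
  finally have "real (card P) * exp (- 72 * r) * (2/3) \<le> 1" .
  then have "real (card P) \<le> 3/2 / exp (- 72 * r)" by (simp add: field_simps)
  also have "\<dots> = 3/2 * exp (72 * r)" by (simp add: exp_minus field_simps)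
  finally show ?thesis .
qed

end


lemma exp_bound:
  assumes r: "0 < (r::real)" and N: "real N \<le> 3/2 * exp (72 * r)"
  shows "real N \<le> exp (216 * r)"
proof (cases "N \<le> 1")
  case True
  then have "real N \<le> 1" by simp
  also have "1 \<le> exp (216 * r)" using r by simp
  finally show ?thesis .
next
  case False
  define E where "E = exp (72 * r)"
  have E0: "0 < E" by (simp add: E_def)
  have "2 \<le> 3/2 * E" using False N E_def by linarith
  then have E1: "4/3 \<le> E" by simp
  have "16/9 \<le> E * E" using mult_mono[OF E1 E1] E0 by simp
  then have "3/2 \<le> E * E" by simp
  then have "3/2 * E \<le> (E * E) * E" using E0 by (simp add: mult_right_mono)
  also have "(E * E) * E = exp (216 * r)" unfolding E_def by (simp add: exp_add[symmetric])
  finally show ?thesis using N E_def by simp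
qed

context Bset
begin

lemma cover:
  assumes r: "0 < r" and U: "U \<subseteq> {x. (\<forall>j\<ge>n. x j = 0) \<and> (\<Sum>j<n. (x j)\<^sup>2) \<le> 1}"
  shows "\<exists>(N::nat) (V::nat \<Rightarrow> (nat \<Rightarrow> real) set). real N \<le> exp (216 * r) \<and> U = (\<Union>i\<in>{1..N}. V i) \<and>
         (\<forall>i\<in>{1..N}. \<forall>x\<in>V i. \<forall>x'\<in>V i. beta (x - x') \<le> r powr (-1/2) * s)"
proof -
  define \<delta> where "\<delta> = r powr (-1/2) * s / 2"
  have \<delta>0: "0 \<le> \<delta>" using s_nonneg by (simp add: \<delta>_def)
  define Sep where "Sep = {P. finite P \<and> P \<subseteq> U \<and> (\<forall>p\<in>P. \<forall>q\<in>P. p \<noteq> q \<longrightarrow> \<delta> < beta (p - q))}"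
  define B where "B = nat \<lfloor>3/2 * exp (72 * r)\<rfloor>"
  have cB: "card P \<le> B" if "P \<in> Sep" for P
  proof -
    have "real (card P) \<le> 3/2 * exp (72 * r)"
      by (rule card_bound[OF r]) (use that U in \<open>auto simp: Sep_def \<delta>_def\<close>)
    then show ?thesis unfolding B_def by (simp add: le_nat_floor)
  qed
  have fin: "finite (card ` Sep)" by (rule finite_subset[of _ "{..B}"]) (use cB in auto)
  have e: "{} \<in> Sep" by (simp add: Sep_def)
  define k where "k = Max (card ` Sep)"
  have "k \<in> card ` Sep" unfolding k_def using fin e by (intro Max_in) auto
  then obtain P where P: "P \<in> Sep" "card P = k" by auto
  have Pfin: "finite P" and PU: "P \<subseteq> U" using P by (auto simp: Sep_def)
  have maxl: "\<exists>p\<in>P. beta (u - p) \<le> \<delta>" if u: "u \<in> U" for u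
  proof (rule ccontr)
    assume nc: "\<not> (\<exists>p\<in>P. beta (u - p) \<le> \<delta>)"
    have uP: "u \<notin> P"
    proof
      assume "u \<in> P"
      moreover have "beta (u - u) = 0" using beta_zero by (simp add: fun_diff_def)
      ultimately show False using nc \<delta>0 by auto
    qed
    have "insert u P \<in> Sep"
      unfolding Sep_def
    proof (intro CollectI conjI ballI impI)
      show "finite (insert u P)" using Pfin by simp
      show "insert u P \<subseteq> U" using PU u by simp
      fix p q assume pq: "p \<in> insert u P" "q \<in> insert u P" "p \<noteq> q"
      show "\<delta> < beta (p - q)"
      proof (cases "p = u")
        case True
        then have "q \<in> P" using pq by auto
        then show ?thesis using nc True by auto
      next
        case pu: False
        show ?thesis
        proof (cases "q = u")
          case True
          then have "p \<in> P" using pq pu by auto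
          then show ?thesis using nc True beta_swap[of p u] by auto
        next
          case False
          then show ?thesis using pq pu P(1) by (auto simp: Sep_def)
        qed
      qed
    qed
    then have "card (insert u P) \<le> k" unfolding k_def using fin by (intro Max_ge) auto
    then show False using uP Pfin P(2) by simp
  qed
  obtain f where f: "bij_betw f {1..card P} P" using ex_bij_betw_nat_finite_1[OF Pfin] by blast
  define N where "N = card P"
  define V where "V = (\<lambda>i. {u \<in> U. beta (u - f i) \<le> \<delta>})"
  have "real N \<le> exp (216 * r)"
  proof (rule exp_bound[OF r])
    show "real N \<le> 3/2 * exp (72 * r)"
      unfolding N_def by (rule card_bound[OF r Pfin]) (use P(1) U in \<open>auto simp: Sep_def \<delta>_def\<close>)
  qed
  moreover have "U = (\<Union>i\<in>{1..N}. V i)"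
  proof
    show "(\<Union>i\<in>{1..N}. V i) \<subseteq> U" by (auto simp: V_def)
    show "U \<subseteq> (\<Union>i\<in>{1..N}. V i)"
    proof
      fix u assume u: "u \<in> U"
      obtain p where p: "p \<in> P" "beta (u - p) \<le> \<delta>" using maxl[OF u] by auto
      have "p \<in> f ` {1..card P}" using f p(1) by (simp add: bij_betw_def)
      then obtain i where i: "i \<in> {1..N}" "p = f i" by (auto simp: N_def)
      then show "u \<in> (\<Union>i\<in>{1..N}. V i)" using u p by (auto simp: V_def)
    qed
  qed
  moreover have "\<forall>i\<in>{1..N}. \<forall>x\<in>V i. \<forall>x'\<in>V i. beta (x - x') \<le> r powr (-1/2) * s"
  proof (intro ballI)
    fix i x x' assume "i \<in> {1..N}" "x \<in> V i" "x' \<in> V i"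
    then have b: "beta (x - f i) \<le> \<delta>" "beta (x' - f i) \<le> \<delta>" by (auto simp: V_def)
    have "beta (x - x') \<le> beta (x - f i) + beta (f i - x')" by (rule beta_tri)
    also have "beta (f i - x') = beta (x' - f i)" by (rule beta_swap)
    finally have "beta (x - x') \<le> beta (x - f i) + beta (x' - f i)" .
    moreover have "\<delta> + \<delta> = r powr (-1/2) * s" by (simp add: \<delta>_def)
    ultimately show "beta (x - x') \<le> r powr (-1/2) * s" using b by linarith
  qed
  ultimately show ?thesis by blast
qed

end

theorem corollary5p7:
  shows "\<exists>C::real. \<forall>(n::nat) (m::nat) (a::nat \<Rightarrow> nat \<Rightarrow> nat \<Rightarrow> real)
      (T::(nat \<Rightarrow> real) set) (U::(nat \<Rightarrow> real) set) (r::real).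
      T \<noteq> {} \<longrightarrow> T \<subseteq> {t. \<forall>k\<ge>m. t k = 0} \<longrightarrow> (\<exists>M. \<forall>t\<in>T. \<forall>k<m. \<bar>t k\<bar> \<le> M) \<longrightarrow>
      U \<subseteq> {x. (\<forall>j\<ge>n. x j = 0) \<and> (\<Sum>j<n. (x j)\<^sup>2) \<le> 1} \<longrightarrow> r > 0 \<longrightarrow>
      (\<exists>(N::nat) (V::nat \<Rightarrow> (nat \<Rightarrow> real) set).
         real N \<le> exp (C * r) \<and> U = (\<Union>i\<in>{1..N}. V i) \<and>
         (\<forall>i\<in>{1..N}. \<forall>x\<in>V i. \<forall>x'\<in>V i.
            betaAT n m a T (x - x') \<le> r powr (-1/2) * sAT n m a T))"
proof (rule exI[of _ 216], intro allI impI)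
  fix n m :: nat and a :: "nat \<Rightarrow> nat \<Rightarrow> nat \<Rightarrow> real" and T U :: "(nat \<Rightarrow> real) set" and r :: real
  assume Tne: "T \<noteq> {}" and "T \<subseteq> {t. \<forall>k\<ge>m. t k = 0}" and Mex: "\<exists>M. \<forall>t\<in>T. \<forall>k<m. \<bar>t k\<bar> \<le> M"
    and U: "U \<subseteq> {x. (\<forall>j\<ge>n. x j = 0) \<and> (\<Sum>j<n. (x j)\<^sup>2) \<le> 1}" and r: "r > 0"
  obtain M where M: "\<forall>t\<in>T. \<forall>k<m. \<bar>t k\<bar> \<le> M" using Mex by blast
  interpret Bset m T "max M 0" n a
    by unfold_locales (use Tne M in \<open>auto intro: le_max_iff_disj[THEN iffD2]\<close>)
  obtain N V where NV: "real N \<le> exp (216 * r)" "U = (\<Union>i\<in>{1..N}. V i)"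
    "\<forall>i\<in>{1..N}. \<forall>x\<in>V i. \<forall>x'\<in>V i. beta (x - x') \<le> r powr (-1/2) * sAT n m a T"
    using cover[OF r U] by blast
  show "\<exists>(N::nat) (V::nat \<Rightarrow> (nat \<Rightarrow> real) set).
         real N \<le> exp (216 * r) \<and> U = (\<Union>i\<in>{1..N}. V i) \<and>
         (\<forall>i\<in>{1..N}. \<forall>x\<in>V i. \<forall>x'\<in>V i.
            betaAT n m a T (x - x') \<le> r powr (-1/2) * sAT n m a T)"
    using NV betaAT_eq by auto
qed


end
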